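(* Let $(\mathcal C,S,T)$ be a semi-thin association schemoid. For any $\alpha,\beta,\gamma\in S_0$, $\sigma\in{}_\alpha S_\beta$ and $\tau\in{}_\beta S_\gamma$, there exists a unique $\mu\in{}_\alpha S_\gamma$ such that $p^\mu_{\tau\sigma}=1$; moreover $p^{\mu'}_{\tau\sigma}=0$ for every $\mu'\in S$ with $\mu'\neq\mu$.
   Context: Write $s(f),t(f)$ for source and target. A quasi-schemoid is a pair $(\mathcal C,S)$ with $\mathcal C$ a small category and $S$ a partition of $mor(\mathcal C)$ into nonempty blocks such that for all $\sigma,\tau,\mu\in S$ and $f,g\in\mu$ the sets $\{(a,b)\in\sigma\times\tau: s(a)=t(b), a\circ b=f\}$ and the analogous set for $g$ have equal cardinality, denoted $p^\mu_{\sigma\tau}$. An association schemoid is a triple $(\mathcal C,S,T)$ where $(\mathcal C,S)$ is a quasi-schemoid, every block containing an endomorphism consists only of endomorphisms, and $T:\mathcal C\to\mathcal C$ is a contravariant functor with $T^2=\mathrm{id}$ and $\{T(f):f\in\sigma\}\in S$ for all $\sigma\in S$. With $J_0=\{1_x\}$, it is unital if every block meeting $J_0$ lies in $J_0$. A unital association schemoid is semi-thin if (i) $\#\{f\in\sigma: s(f)=x\}\le 1$ for all $\sigma\in S$, $x\in ob(\mathcal C)$, and (ii) $\mathcal C$ is a groupoid and $T(f)=f^{-1}$ for all morphisms $f$. $S_0=\{\alpha\in S:\alpha\cap J_0\neq\emptyset\}$, and for $\alpha,\beta\in S_0$, ${}_\alpha S_\beta=\{\sigma\in S: p^\sigma_{\sigma\alpha}=p^\sigma_{\beta\sigma}=1\}$.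 *)

theory Defs
  imports Main "HOL-Library.Equipollence"
begin

text \<open>A small category given by explicit data: objects, morphisms, source, target,
  composition (Cmp a b = a o b, defined when Src a = Tgt b) and identities.\<close>

record ('o, 'm) cat =
  Ob  :: "'o set"
  Mor :: "'m set"
  Src :: "'m \<Rightarrow> 'o"
  Tgt :: "'m \<Rightarrow> 'o"
  Cmp :: "'m \<Rightarrow> 'm \<Rightarrow> 'm"
  Idn :: "'o \<Rightarrow> 'm"

definition is_category :: "('o, 'm) cat \<Rightarrow> bool" where
  "is_category C \<longleftrightarrow>
     (\<forall>f\<in>Mor C. Src C f \<in> Ob C \<and> Tgt C f \<in> Ob C) \<and>
     (\<forall>x\<in>Ob C. Idn C x \<in> Mor C \<and> Src C (Idn C x) = x \<and> Tgt C (Idn C x) = x) \<and>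
     (\<forall>a\<in>Mor C. \<forall>b\<in>Mor C. Src C a = Tgt C b \<longrightarrow>
        Cmp C a b \<in> Mor C \<and> Src C (Cmp C a b) = Src C b \<and> Tgt C (Cmp C a b) = Tgt C a) \<and>
     (\<forall>f\<in>Mor C. Cmp C f (Idn C (Src C f)) = f \<and> Cmp C (Idn C (Tgt C f)) f = f) \<and>
     (\<forall>a\<in>Mor C. \<forall>b\<in>Mor C. \<forall>c\<in>Mor C. Src C a = Tgt C b \<longrightarrow> Src C b = Tgt C c \<longrightarrow>
        Cmp C (Cmp C a b) c = Cmp C a (Cmp C b c))"

definition is_partition :: "'m set \<Rightarrow> 'm set set \<Rightarrow> bool" where
  "is_partition M S \<longleftrightarrow> (\<forall>\<sigma>\<in>S. \<sigma> \<noteq> {}) \<and> \<Union>S = M \<and>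
     (\<forall>\<sigma>\<in>S. \<forall>\<tau>\<in>S. \<sigma> \<noteq> \<tau> \<longrightarrow> \<sigma> \<inter> \<tau> = {})"

definition decomp :: "('o, 'm) cat \<Rightarrow> 'm set \<Rightarrow> 'm set \<Rightarrow> 'm \<Rightarrow> ('m \<times> 'm) set" where
  "decomp C \<sigma> \<tau> f = {(a, b). a \<in> \<sigma> \<and> b \<in> \<tau> \<and> Src C a = Tgt C b \<and> Cmp C a b = f}"

definition is_quasi_schemoid :: "('o, 'm) cat \<Rightarrow> 'm set set \<Rightarrow> bool" where
  "is_quasi_schemoid C S \<longleftrightarrow> is_category C \<and> is_partition (Mor C) S \<and>
     (\<forall>\<sigma>\<in>S. \<forall>\<tau>\<in>S. \<forall>\<mu>\<in>S. \<forall>f\<in>\<mu>. \<forall>g\<in>\<mu>. decomp C \<sigma> \<tau> f \<approx> decomp C \<sigma> \<tau> g)"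

text \<open>Structure constant p^mu_{sigma tau} (well defined by the quasi-schemoid axiom).\<close>
definition pc :: "('o, 'm) cat \<Rightarrow> 'm set \<Rightarrow> 'm set \<Rightarrow> 'm set \<Rightarrow> nat" where
  "pc C \<mu> \<sigma> \<tau> = card (decomp C \<sigma> \<tau> (SOME f. f \<in> \<mu>))"

definition is_contra_involution :: "('o, 'm) cat \<Rightarrow> ('o \<Rightarrow> 'o) \<Rightarrow> ('m \<Rightarrow> 'm) \<Rightarrow> bool" where
  "is_contra_involution C TO TM \<longleftrightarrow>
     (\<forall>x\<in>Ob C. TO x \<in> Ob C \<and> TO (TO x) = x \<and> TM (Idn C x) = Idn C (TO x)) \<and>
     (\<forall>f\<in>Mor C. TM f \<in> Mor C \<and> Src C (TM f) = TO (Tgt C f) \<and> Tgt C (TM f) = TO (Src C f)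
        \<and> TM (TM f) = f) \<and>
     (\<forall>a\<in>Mor C. \<forall>b\<in>Mor C. Src C a = Tgt C b \<longrightarrow> TM (Cmp C a b) = Cmp C (TM b) (TM a))"

definition is_association_schemoid ::
  "('o, 'm) cat \<Rightarrow> 'm set set \<Rightarrow> ('o \<Rightarrow> 'o) \<Rightarrow> ('m \<Rightarrow> 'm) \<Rightarrow> bool" where
  "is_association_schemoid C S TO TM \<longleftrightarrow> is_quasi_schemoid C S \<and>
     (\<forall>\<sigma>\<in>S. (\<exists>f\<in>\<sigma>. Src C f = Tgt C f) \<longrightarrow> (\<forall>f\<in>\<sigma>. Src C f = Tgt C f)) \<and>
     is_contra_involution C TO TM \<and>
     (\<forall>\<sigma>\<in>S. TM ` \<sigma> \<in> S)"

definition J0 :: "('o, 'm) cat \<Rightarrow> 'm set" where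
  "J0 C = Idn C ` Ob C"

definition is_unital :: "('o, 'm) cat \<Rightarrow> 'm set set \<Rightarrow> bool" where
  "is_unital C S \<longleftrightarrow> (\<forall>\<sigma>\<in>S. \<sigma> \<inter> J0 C \<noteq> {} \<longrightarrow> \<sigma> \<subseteq> J0 C)"

definition is_groupoid :: "('o, 'm) cat \<Rightarrow> bool" where
  "is_groupoid C \<longleftrightarrow> (\<forall>f\<in>Mor C. \<exists>g\<in>Mor C. Src C g = Tgt C f \<and> Tgt C g = Src C f \<and>
     Cmp C g f = Idn C (Src C f) \<and> Cmp C f g = Idn C (Tgt C f))"

definition is_semi_thin ::
  "('o, 'm) cat \<Rightarrow> 'm set set \<Rightarrow> ('o \<Rightarrow> 'o) \<Rightarrow> ('m \<Rightarrow> 'm) \<Rightarrow> bool" where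
  "is_semi_thin C S TO TM \<longleftrightarrow> is_association_schemoid C S TO TM \<and> is_unital C S \<and>
     (\<forall>\<sigma>\<in>S. \<forall>x\<in>Ob C. finite {f \<in> \<sigma>. Src C f = x} \<and> card {f \<in> \<sigma>. Src C f = x} \<le> 1) \<and>
     is_groupoid C \<and>
     (\<forall>f\<in>Mor C. Cmp C (TM f) f = Idn C (Src C f) \<and> Cmp C f (TM f) = Idn C (Tgt C f))"

definition S0 :: "('o, 'm) cat \<Rightarrow> 'm set set \<Rightarrow> 'm set set" where
  "S0 C S = {\<alpha>\<in>S. \<alpha> \<inter> J0 C \<noteq> {}}"

definition subS :: "('o, 'm) cat \<Rightarrow> 'm set set \<Rightarrow> 'm set \<Rightarrow> 'm set \<Rightarrow> 'm set set" where
  "subS C S \<alpha> \<beta> = {\<sigma>\<in>S. pc C \<sigma> \<sigma> \<alpha> = 1 \<and> pc C \<sigma> \<beta> \<sigma> = 1}"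

end

theory Submission
  imports Defs
begin

lemma eqpoll_nonempty: "A \<approx> B \<Longrightarrow> A \<noteq> {} \<Longrightarrow> B \<noteq> {}"
  unfolding eqpoll_def bij_betw_def by auto

locale st =
  fixes C :: "('o, 'm) cat" and S :: "'m set set" and TO :: "'o \<Rightarrow> 'o" and TM :: "'m \<Rightarrow> 'm"
  assumes ST: "is_semi_thin C S TO TM"
begin

lemma ST': "is_category C \<and> is_partition (Mor C) S \<and>
     (\<forall>\<sigma>\<in>S. \<forall>\<tau>\<in>S. \<forall>\<mu>\<in>S. \<forall>f\<in>\<mu>. \<forall>g\<in>\<mu>. decomp C \<sigma> \<tau> f \<approx> decomp C \<sigma> \<tau> g) \<and>
     is_unital C S \<and>
     (\<forall>\<sigma>\<in>S. \<forall>x\<in>Ob C. finite {f \<in> \<sigma>. Src C f = x} \<and> card {f \<in> \<sigma>. Src C f = x} \<le> 1) \<and>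
     is_groupoid C"
  using ST unfolding is_semi_thin_def is_association_schemoid_def is_quasi_schemoid_def
  by (elim conjE) (intro conjI)

lemma cat: "is_category C" using ST' by (elim conjE)

lemma catD: "(\<forall>f\<in>Mor C. Src C f \<in> Ob C \<and> Tgt C f \<in> Ob C) \<and>
     (\<forall>x\<in>Ob C. Idn C x \<in> Mor C \<and> Src C (Idn C x) = x \<and> Tgt C (Idn C x) = x) \<and>
     (\<forall>a\<in>Mor C. \<forall>b\<in>Mor C. Src C a = Tgt C b \<longrightarrow>
        Cmp C a b \<in> Mor C \<and> Src C (Cmp C a b) = Src C b \<and> Tgt C (Cmp C a b) = Tgt C a) \<and>
     (\<forall>f\<in>Mor C. Cmp C f (Idn C (Src C f)) = f \<and> Cmp C (Idn C (Tgt C f)) f = f)"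
  using cat unfolding is_category_def by (elim conjE) (intro conjI)

lemma C1: "f \<in> Mor C \<Longrightarrow> Src C f \<in> Ob C \<and> Tgt C f \<in> Ob C"
  using catD by (elim conjE) (rule bspec)
lemma C2: "x \<in> Ob C \<Longrightarrow> Idn C x \<in> Mor C \<and> Src C (Idn C x) = x \<and> Tgt C (Idn C x) = x"
  using catD by (elim conjE) (rule bspec)
lemma C3: "a \<in> Mor C \<Longrightarrow> b \<in> Mor C \<Longrightarrow> Src C a = Tgt C b \<Longrightarrow>
   Cmp C a b \<in> Mor C \<and> Src C (Cmp C a b) = Src C b \<and> Tgt C (Cmp C a b) = Tgt C a"
proof -
  assume h: "a \<in> Mor C" "b \<in> Mor C" "Src C a = Tgt C b"
  have "\<forall>a\<in>Mor C. \<forall>b\<in>Mor C. Src C a = Tgt C b \<longrightarrow>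
        Cmp C a b \<in> Mor C \<and> Src C (Cmp C a b) = Src C b \<and> Tgt C (Cmp C a b) = Tgt C a"
    using catD by (elim conjE)
  then show ?thesis using h by blast
qed
lemma C4: "f \<in> Mor C \<Longrightarrow> Cmp C f (Idn C (Src C f)) = f \<and> Cmp C (Idn C (Tgt C f)) f = f"
  using catD by (elim conjE) (rule bspec)

lemma part: "is_partition (Mor C) S"
  using ST' by (elim conjE)

lemma P1: "\<rho> \<in> S \<Longrightarrow> \<rho> \<noteq> {} \<and> \<rho> \<subseteq> Mor C"
  using part unfolding is_partition_def by blast
lemma P2: "f \<in> Mor C \<Longrightarrow> \<exists>\<rho>\<in>S. f \<in> \<rho>"
  using part unfolding is_partition_def by blast
lemma P3: "\<rho> \<in> S \<Longrightarrow> \<rho>' \<in> S \<Longrightarrow> f \<in> \<rho> \<Longrightarrow> f \<in> \<rho>' \<Longrightarrow> \<rho> = \<rho>'"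
  using part unfolding is_partition_def by blast

lemma Q: "\<rho>1 \<in> S \<Longrightarrow> \<rho>2 \<in> S \<Longrightarrow> \<nu> \<in> S \<Longrightarrow> f \<in> \<nu> \<Longrightarrow> g \<in> \<nu> \<Longrightarrow>
   decomp C \<rho>1 \<rho>2 f \<noteq> {} \<Longrightarrow> decomp C \<rho>1 \<rho>2 g \<noteq> {}"
proof -
  assume h: "\<rho>1 \<in> S" "\<rho>2 \<in> S" "\<nu> \<in> S" "f \<in> \<nu>" "g \<in> \<nu>" "decomp C \<rho>1 \<rho>2 f \<noteq> {}"
  have "\<forall>\<sigma>\<in>S. \<forall>\<tau>\<in>S. \<forall>\<mu>\<in>S. \<forall>f\<in>\<mu>. \<forall>g\<in>\<mu>. decomp C \<sigma> \<tau> f \<approx> decomp C \<sigma> \<tau> g"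
    using ST' by (elim conjE)
  then have "decomp C \<rho>1 \<rho>2 f \<approx> decomp C \<rho>1 \<rho>2 g" using h by blast
  then show ?thesis using eqpoll_nonempty h by blast
qed

lemma U: "\<epsilon> \<in> S0 C S \<Longrightarrow> \<epsilon> \<in> S \<and> \<epsilon> \<subseteq> Idn C ` Ob C"
proof -
  assume h: "\<epsilon> \<in> S0 C S"
  have "is_unital C S" using ST' by (elim conjE)
  then show ?thesis using h unfolding is_unital_def S0_def J0_def by blast
qed

lemma thin: assumes "\<rho> \<in> S" "f \<in> \<rho>" "g \<in> \<rho>" "Src C f = Src C g" shows "f = g"
proof -
  have "Src C f \<in> Ob C" using assms P1 C1 by blast
  moreover have "\<forall>\<sigma>\<in>S. \<forall>x\<in>Ob C. finite {f \<in> \<sigma>. Src C f = x} \<and> card {f \<in> \<sigma>. Src C f = x} \<le> 1"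
    using ST' by (elim conjE)
  ultimately have "finite {h \<in> \<rho>. Src C h = Src C f}" "card {h \<in> \<rho>. Src C h = Src C f} \<le> 1"
    using assms(1) by blast+
  then show ?thesis using assms card_le_Suc0_iff_eq[of "{h \<in> \<rho>. Src C h = Src C f}"] by auto
qed

lemma grp: "f \<in> Mor C \<Longrightarrow> \<exists>g\<in>Mor C. Src C g = Tgt C f \<and> Cmp C g f = Idn C (Src C f)"
proof -
  assume h: "f \<in> Mor C"
  have "is_groupoid C" using ST' by (elim conjE)
  then show ?thesis using h unfolding is_groupoid_def by blast
qed

lemma decomp_sub: assumes "\<tau> \<in> S" "\<sigma> \<in> S" "p \<in> decomp C \<tau> \<sigma> f" "q \<in> decomp C \<tau> \<sigma> f"
  shows "p = q"
proof -
  obtain a b a' b' where p: "p = (a,b)" and q: "q = (a',b')" by fastforce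
  have h: "a \<in> \<tau>" "b \<in> \<sigma>" "Src C a = Tgt C b" "Cmp C a b = f"
     "a' \<in> \<tau>" "b' \<in> \<sigma>" "Src C a' = Tgt C b'" "Cmp C a' b' = f"
    using assms(3,4) p q unfolding decomp_def by auto
  have m: "a \<in> Mor C" "b \<in> Mor C" "a' \<in> Mor C" "b' \<in> Mor C" using h assms P1 by blast+
  have "Src C b = Src C b'" using C3[OF m(1,2) h(3)] C3[OF m(3,4) h(7)] h by metis
  then have "b = b'" using thin assms h by blast
  then have "a = a'" using thin assms h by metis
  then show ?thesis using p q \<open>b = b'\<close> by simp
qed

lemma card_one: assumes "\<tau> \<in> S" "\<sigma> \<in> S" "decomp C \<tau> \<sigma> f \<noteq> {}"
  shows "card (decomp C \<tau> \<sigma> f) = 1"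
proof -
  obtain p where "p \<in> decomp C \<tau> \<sigma> f" using assms by blast
  then have "decomp C \<tau> \<sigma> f = {p}" using decomp_sub[OF assms(1,2)] by blast
  then show ?thesis by simp
qed

lemma card_zero: assumes "\<tau> \<in> S" "\<sigma> \<in> S"
  shows "card (decomp C \<tau> \<sigma> f) = 0 \<longleftrightarrow> decomp C \<tau> \<sigma> f = {}"
proof
  assume "card (decomp C \<tau> \<sigma> f) = 0"
  then show "decomp C \<tau> \<sigma> f = {}" using card_one[OF assms] by force
qed simp

lemma some_in: "\<rho> \<in> S \<Longrightarrow> (SOME f. f \<in> \<rho>) \<in> \<rho>"
  using P1 by (meson ex_in_conv someI_ex)

lemma card_ne: assumes "\<tau> \<in> S" "\<sigma> \<in> S"
  shows "card (decomp C \<tau> \<sigma> f) = 1 \<longleftrightarrow> decomp C \<tau> \<sigma> f \<noteq> {}"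
  using card_one[OF assms] by fastforce

lemma decR: assumes "\<epsilon> \<in> S0 C S" "\<rho> \<in> S" "f \<in> Mor C"
  shows "decomp C \<rho> \<epsilon> f \<noteq> {} \<longleftrightarrow> f \<in> \<rho> \<and> Idn C (Src C f) \<in> \<epsilon>"
proof
  assume "decomp C \<rho> \<epsilon> f \<noteq> {}"
  then obtain a b where h: "a \<in> \<rho>" "b \<in> \<epsilon>" "Src C a = Tgt C b" "Cmp C a b = f"
    unfolding decomp_def by auto
  obtain y where y: "y \<in> Ob C" "b = Idn C y" using U assms h by blast
  have am: "a \<in> Mor C" using P1 assms h by blast
  have "Src C a = y" using h y C2 by metis
  then have "a = f" using C4[OF am] h y by metis
  then show "f \<in> \<rho> \<and> Idn C (Src C f) \<in> \<epsilon>" using h y \<open>Src C a = y\<close> by simp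
next
  assume h: "f \<in> \<rho> \<and> Idn C (Src C f) \<in> \<epsilon>"
  have "(f, Idn C (Src C f)) \<in> decomp C \<rho> \<epsilon> f"
    unfolding decomp_def using h C1 C2 C4 assms(3) by auto
  then show "decomp C \<rho> \<epsilon> f \<noteq> {}" by blast
qed

lemma decL: assumes "\<epsilon> \<in> S0 C S" "\<rho> \<in> S" "f \<in> Mor C"
  shows "decomp C \<epsilon> \<rho> f \<noteq> {} \<longleftrightarrow> f \<in> \<rho> \<and> Idn C (Tgt C f) \<in> \<epsilon>"
proof
  assume "decomp C \<epsilon> \<rho> f \<noteq> {}"
  then obtain a b where h: "a \<in> \<epsilon>" "b \<in> \<rho>" "Src C a = Tgt C b" "Cmp C a b = f"
    unfolding decomp_def by auto
  obtain y where y: "y \<in> Ob C" "a = Idn C y" using U assms h by blast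
  have bm: "b \<in> Mor C" using P1 assms h by blast
  have "Tgt C b = y" using h y C2 by metis
  then have "b = f" using C4[OF bm] h y by metis
  then show "f \<in> \<rho> \<and> Idn C (Tgt C f) \<in> \<epsilon>" using h y \<open>Tgt C b = y\<close> by simp
next
  assume h: "f \<in> \<rho> \<and> Idn C (Tgt C f) \<in> \<epsilon>"
  have "(Idn C (Tgt C f), f) \<in> decomp C \<epsilon> \<rho> f"
    unfolding decomp_def using h C1 C2 C4 assms(3) by auto
  then show "decomp C \<epsilon> \<rho> f \<noteq> {}" by blast
qed

lemma pcR: assumes "\<epsilon> \<in> S0 C S" "\<rho> \<in> S"
  shows "pc C \<rho> \<rho> \<epsilon> = 1 \<longleftrightarrow> (\<forall>f\<in>\<rho>. Idn C (Src C f) \<in> \<epsilon>)"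
proof -
  let ?f = "SOME f. f \<in> \<rho>"
  have f: "?f \<in> \<rho>" using some_in assms by blast
  have eS: "\<epsilon> \<in> S" using U assms by blast
  have "pc C \<rho> \<rho> \<epsilon> = 1 \<longleftrightarrow> decomp C \<rho> \<epsilon> ?f \<noteq> {}"
    unfolding pc_def using card_ne assms eS by blast
  also have "\<dots> \<longleftrightarrow> (\<forall>f\<in>\<rho>. decomp C \<rho> \<epsilon> f \<noteq> {})"
    using Q[OF assms(2) eS assms(2)] f by blast
  also have "\<dots> \<longleftrightarrow> (\<forall>f\<in>\<rho>. Idn C (Src C f) \<in> \<epsilon>)"
    using decR[OF assms(1,2)] P1 assms(2) by blast
  finally show ?thesis .
qed

lemma pcL: assumes "\<epsilon> \<in> S0 C S" "\<rho> \<in> S"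
  shows "pc C \<rho> \<epsilon> \<rho> = 1 \<longleftrightarrow> (\<forall>f\<in>\<rho>. Idn C (Tgt C f) \<in> \<epsilon>)"
proof -
  let ?f = "SOME f. f \<in> \<rho>"
  have f: "?f \<in> \<rho>" using some_in assms by blast
  have eS: "\<epsilon> \<in> S" using U assms by blast
  have "pc C \<rho> \<epsilon> \<rho> = 1 \<longleftrightarrow> decomp C \<epsilon> \<rho> ?f \<noteq> {}"
    unfolding pc_def using card_ne assms eS by blast
  also have "\<dots> \<longleftrightarrow> (\<forall>f\<in>\<rho>. decomp C \<epsilon> \<rho> f \<noteq> {})"
    using Q[OF eS assms(2) assms(2)] f by blast
  also have "\<dots> \<longleftrightarrow> (\<forall>f\<in>\<rho>. Idn C (Tgt C f) \<in> \<epsilon>)"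
    using decL[OF assms(1,2)] P1 assms(2) by blast
  finally show ?thesis .
qed

lemma main:
  assumes aS: "\<alpha> \<in> S0 C S" and bS: "\<beta> \<in> S0 C S" and cS: "\<gamma> \<in> S0 C S"
    and sig: "\<sigma> \<in> subS C S \<alpha> \<beta>" and tau: "\<tau> \<in> subS C S \<beta> \<gamma>"
  shows "\<exists>\<mu>. \<mu> \<in> subS C S \<alpha> \<gamma> \<and> pc C \<mu> \<tau> \<sigma> = 1
            \<and> (\<forall>\<mu>'\<in>subS C S \<alpha> \<gamma>. pc C \<mu>' \<tau> \<sigma> = 1 \<longrightarrow> \<mu>' = \<mu>)
            \<and> (\<forall>\<mu>'\<in>S. \<mu>' \<noteq> \<mu> \<longrightarrow> pc C \<mu>' \<tau> \<sigma> = 0)"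
proof -
  have sS: "\<sigma> \<in> S" and tS: "\<tau> \<in> S" using sig tau unfolding subS_def by auto
  have aS': "\<alpha> \<in> S" and bS': "\<beta> \<in> S" using U aS bS by auto
  have sA: "\<forall>f\<in>\<sigma>. Idn C (Src C f) \<in> \<alpha>" using pcR[OF aS sS] sig unfolding subS_def by auto
  have sB: "\<forall>f\<in>\<sigma>. Idn C (Tgt C f) \<in> \<beta>" using pcL[OF bS sS] sig unfolding subS_def by auto
  have tB: "\<forall>f\<in>\<tau>. Idn C (Src C f) \<in> \<beta>" using pcR[OF bS tS] tau unfolding subS_def by auto
  have tC: "\<forall>f\<in>\<tau>. Idn C (Tgt C f) \<in> \<gamma>" using pcL[OF cS tS] tau unfolding subS_def by auto
  obtain b0 where b0: "b0 \<in> \<sigma>" using P1 sS by blast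
  have b0M: "b0 \<in> Mor C" using P1 sS b0 by blast
  define y where "y = Tgt C b0"
  have yO: "y \<in> Ob C" using C1 b0M y_def by blast
  have yB: "Idn C y \<in> \<beta>" using sB b0 y_def by blast
  obtain a1 where a1: "a1 \<in> \<tau>" using P1 tS by blast
  have a1M: "a1 \<in> Mor C" using P1 tS a1 by blast
  obtain g where g: "g \<in> Mor C" "Src C g = Tgt C a1" "Cmp C g a1 = Idn C (Src C a1)"
    using grp[OF a1M] by blast
  obtain \<rho> where \<rho>: "\<rho> \<in> S" "g \<in> \<rho>" using P2 g by blast
  have "(g, a1) \<in> decomp C \<rho> \<tau> (Idn C (Src C a1))" unfolding decomp_def using g \<rho> a1 by auto
  then have "decomp C \<rho> \<tau> (Idn C y) \<noteq> {}"
    using Q[OF \<rho>(1) tS bS'] tB a1 yB by blast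
  then obtain c a0 where ca: "c \<in> \<rho>" "a0 \<in> \<tau>" "Src C c = Tgt C a0" "Cmp C c a0 = Idn C y"
    unfolding decomp_def by auto
  have cM: "c \<in> Mor C" and a0M: "a0 \<in> Mor C" using P1 \<rho> tS ca by blast+
  have "Src C a0 = y" using C3[OF cM a0M ca(3)] ca(4) C2[OF yO] by metis
  then have comp: "Src C a0 = Tgt C b0" using y_def by simp
  define h0 where "h0 = Cmp C a0 b0"
  have h0: "h0 \<in> Mor C" "Src C h0 = Src C b0" "Tgt C h0 = Tgt C a0"
    using C3[OF a0M b0M comp] h0_def by auto
  obtain \<mu> where \<mu>: "\<mu> \<in> S" "h0 \<in> \<mu>" using P2 h0 by blast
  have dh0: "decomp C \<tau> \<sigma> h0 \<noteq> {}"
  proof -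
    have "(a0, b0) \<in> decomp C \<tau> \<sigma> h0" unfolding decomp_def using ca b0 comp h0_def by auto
    then show ?thesis by blast
  qed
  have allmu: "\<forall>f\<in>\<mu>. decomp C \<tau> \<sigma> f \<noteq> {}" using Q[OF tS sS \<mu>(1)] \<mu>(2) dh0 by blast
  have key: "\<mu>' = \<mu>" if km: "\<mu>' \<in> S" "f' \<in> \<mu>'" "decomp C \<tau> \<sigma> f' \<noteq> {}" for \<mu>' f'
  proof -
    obtain a b where ab: "a \<in> \<tau>" "b \<in> \<sigma>" "Src C a = Tgt C b" "Cmp C a b = f'"
      using km(3) unfolding decomp_def by auto
    have aM: "a \<in> Mor C" and bM: "b \<in> Mor C" using P1 tS sS ab by blast+
    define x where "x = Src C b"
    have xA: "Idn C x \<in> \<alpha>" using sA ab x_def by blast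
    have b0A: "Idn C (Src C b0) \<in> \<alpha>" using sA b0 by blast
    obtain g0 where g0: "g0 \<in> Mor C" "Src C g0 = Tgt C h0" "Cmp C g0 h0 = Idn C (Src C h0)"
      using grp[OF h0(1)] by blast
    obtain \<rho>0 where \<rho>0: "\<rho>0 \<in> S" "g0 \<in> \<rho>0" using P2 g0 by blast
    have "(g0, h0) \<in> decomp C \<rho>0 \<mu> (Idn C (Src C b0))"
      unfolding decomp_def using g0 \<rho>0 \<mu> h0 by auto
    then have "decomp C \<rho>0 \<mu> (Idn C x) \<noteq> {}"
      using Q[OF \<rho>0(1) \<mu>(1) aS'] xA b0A by blast
    then obtain c g where cg: "c \<in> \<rho>0" "g \<in> \<mu>" "Src C c = Tgt C g" "Cmp C c g = Idn C x"
      unfolding decomp_def by auto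
    have cM: "c \<in> Mor C" and gM: "g \<in> Mor C" using P1 \<rho>0 \<mu> cg by blast+
    have xO: "x \<in> Ob C" using C1 bM x_def by blast
    have gx: "Src C g = x" using C3[OF cM gM cg(3)] cg(4) C2[OF xO] by metis
    have "decomp C \<tau> \<sigma> g \<noteq> {}" using allmu cg by blast
    then obtain a' b' where ab': "a' \<in> \<tau>" "b' \<in> \<sigma>" "Src C a' = Tgt C b'" "Cmp C a' b' = g"
      unfolding decomp_def by auto
    have a'M: "a' \<in> Mor C" and b'M: "b' \<in> Mor C" using P1 tS sS ab' by blast+
    have "Src C b' = x" using C3[OF a'M b'M ab'(3)] ab'(4) gx by metis
    then have "b' = b" using thin[OF sS ab'(2) ab(2)] x_def by simp
    then have "a' = a" using thin[OF tS ab'(1) ab(1)] ab(3) ab'(3) by simp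
    then have "g = f'" using ab ab' \<open>b' = b\<close> by simp
    then show ?thesis using P3[OF km(1) \<mu>(1) km(2)] cg(2) by simp
  qed
  have pcmu: "pc C \<mu> \<tau> \<sigma> = 1"
    unfolding pc_def using card_ne[OF tS sS] allmu some_in[OF \<mu>(1)] by blast
  have pc0: "pc C \<mu>' \<tau> \<sigma> = 0" if "\<mu>' \<in> S" "\<mu>' \<noteq> \<mu>" for \<mu>'
    unfolding pc_def using card_zero[OF tS sS] key[OF that(1) some_in[OF that(1)]] that(2) by blast
  have muA: "\<forall>f\<in>\<mu>. Idn C (Src C f) \<in> \<alpha> \<and> Idn C (Tgt C f) \<in> \<gamma>"
  proof
    fix f assume f: "f \<in> \<mu>"
    then obtain a b where ab: "a \<in> \<tau>" "b \<in> \<sigma>" "Src C a = Tgt C b" "Cmp C a b = f"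
      using allmu unfolding decomp_def by blast
    have aM: "a \<in> Mor C" and bM: "b \<in> Mor C" using P1 tS sS ab by blast+
    have "Src C f = Src C b" "Tgt C f = Tgt C a" using C3[OF aM bM ab(3)] ab(4) by auto
    then show "Idn C (Src C f) \<in> \<alpha> \<and> Idn C (Tgt C f) \<in> \<gamma>" using sA tC ab by simp
  qed
  have musub: "\<mu> \<in> subS C S \<alpha> \<gamma>"
    unfolding subS_def using pcR[OF aS \<mu>(1)] pcL[OF cS \<mu>(1)] muA \<mu>(1) by blast
  show ?thesis
  proof (intro exI conjI ballI impI)
    show "\<mu> \<in> subS C S \<alpha> \<gamma>" by (rule musub)
    show "pc C \<mu> \<tau> \<sigma> = 1" by (rule pcmu)
  next
    fix \<mu>' assume "\<mu>' \<in> subS C S \<alpha> \<gamma>" "pc C \<mu>' \<tau> \<sigma> = 1"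
    then show "\<mu>' = \<mu>" using pc0 unfolding subS_def by force
  next
    fix \<mu>' assume "\<mu>' \<in> S" "\<mu>' \<noteq> \<mu>"
    then show "pc C \<mu>' \<tau> \<sigma> = 0" by (rule pc0)
  qed
qed

end

theorem lemma4p4:
  fixes C :: "('o, 'm) cat" and S :: "'m set set"
    and TO :: "'o \<Rightarrow> 'o" and TM :: "'m \<Rightarrow> 'm"
  assumes "is_semi_thin C S TO TM"
    and "\<alpha> \<in> S0 C S" and "\<beta> \<in> S0 C S" and "\<gamma> \<in> S0 C S"
    and "\<sigma> \<in> subS C S \<alpha> \<beta>" and "\<tau> \<in> subS C S \<beta> \<gamma>"
  shows "\<exists>\<mu>. \<mu> \<in> subS C S \<alpha> \<gamma> \<and> pc C \<mu> \<tau> \<sigma> = 1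
            \<and> (\<forall>\<mu>'\<in>subS C S \<alpha> \<gamma>. pc C \<mu>' \<tau> \<sigma> = 1 \<longrightarrow> \<mu>' = \<mu>)
            \<and> (\<forall>\<mu>'\<in>S. \<mu>' \<noteq> \<mu> \<longrightarrow> pc C \<mu>' \<tau> \<sigma> = 0)"
proof -
  interpret st C S TO TM using assms(1) by unfold_locales
  show ?thesis using main assms(2-6) by blast
qed

end
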